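(* Let $C$ be an independent set of the Kneser graph of flags of type $\{2,3\}$ of $\mathrm{PG}(6,q)$ such that every plane and every solid occurs in at most $q+1$ flags of $C$; for a point $X$ let $\Delta_X(C)$ be the set of flags $(E,S)\in C$ with $X\in E$. Let $P$ be a point and suppose there are flags $(E_i,S_i)\in\Delta_P(C)$, $i\in\{1,2,3\}$, with $E_i\cap E_j=P$ for distinct $i,j$. Then every point $Q$ with $Q\notin\langle E_i,E_j\rangle$ and $Q\notin S_i$ for all $i,j\in\{1,2,3\}$ satisfies $$|\Delta_Q(C)|\le 3q^8+12q^7+21q^6+28q^5+26q^4+18q^3+12q^2+8q+4.$$
   Context: Dimensions are projective (planes 2, solids 3). A flag of type $\{2,3\}$ is a pair $(E,S)$ of a plane $E$ and a solid $S$ with $E\subseteq S$; in the Kneser graph distinct flags $(E,S),(E',S')$ are adjacent iff $E\cap S'=\emptyset$ and $E'\cap S=\emptyset$. $\langle\cdot\rangle$ denotes the span. *)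

theory Defs
  imports "HOL-Analysis.Analysis"
begin

text \<open>PG(6,q) modelled by the vector space F^7 over a finite field F with q = CARD(F).
Projective subspaces of projective dimension d are linear subspaces of
vector dimension d+1.\<close>

type_synonym 'a vec7 = "'a ^ 7"

definition psub_of_dim :: "nat \<Rightarrow> ('a::field) vec7 set \<Rightarrow> bool" where
  "psub_of_dim k U \<longleftrightarrow> vec.subspace U \<and> vec.dim U = k"

definition is_point :: "('a::field) vec7 set \<Rightarrow> bool" where
  "is_point U \<longleftrightarrow> psub_of_dim 1 U"

definition is_plane :: "('a::field) vec7 set \<Rightarrow> bool" where
  "is_plane U \<longleftrightarrow> psub_of_dim 3 U"

definition is_solid :: "('a::field) vec7 set \<Rightarrow> bool" where
  "is_solid U \<longleftrightarrow> psub_of_dim 4 U"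

definition is_flag23 :: "('a::field) vec7 set \<times> 'a vec7 set \<Rightarrow> bool" where
  "is_flag23 F \<longleftrightarrow> is_plane (fst F) \<and> is_solid (snd F) \<and> fst F \<subseteq> snd F"

text \<open>Projectively disjoint = trivial intersection as vector subspaces.\<close>
definition kneser_adj :: "('a::field) vec7 set \<times> 'a vec7 set \<Rightarrow> 'a vec7 set \<times> 'a vec7 set \<Rightarrow> bool" where
  "kneser_adj F F' \<longleftrightarrow> F \<noteq> F' \<and> fst F \<inter> snd F' = {0} \<and> fst F' \<inter> snd F = {0}"

definition independent_flags :: "(('a::field) vec7 set \<times> 'a vec7 set) set \<Rightarrow> bool" where
  "independent_flags C \<longleftrightarrow> (\<forall>F\<in>C. is_flag23 F) \<and> (\<forall>F\<in>C. \<forall>F'\<in>C. \<not> kneser_adj F F')"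

definition Delta :: "('a::field) vec7 set \<Rightarrow> ('a vec7 set \<times> 'a vec7 set) set \<Rightarrow> ('a vec7 set \<times> 'a vec7 set) set" where
  "Delta X C = {F \<in> C. X \<subseteq> fst F}"

end

theory Submission
  imports Defs
begin

lemma card_span_indep:
  fixes B :: "(('a::{field,finite})^'n) set"
  assumes "vec.independent B"
  shows "card (vec.span B) = CARD('a) ^ card B"
proof -
  have "finite B" using assms vec.finiteI_independent by blast
  then show ?thesis using assms
  proof (induction B rule: finite_induct)
    case empty
    then show ?case by simp
  next
    case (insert a B)
    have indB: "vec.independent B" using insert.prems vec.independent_mono by blast
    have anot: "a \<notin> vec.span B" using insert.prems insert.hyps(2) vec.independent_insert[of a B] by simp
    have eq: "vec.span (insert a B) = (\<lambda>(c,x). c *s a + x) ` (UNIV \<times> vec.span B)"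
    proof
      show "vec.span (insert a B) \<subseteq> (\<lambda>(c,x). c *s a + x) ` (UNIV \<times> vec.span B)"
      proof
        fix y assume "y \<in> vec.span (insert a B)"
        then obtain k where k: "y - k *s a \<in> vec.span B" using vec.span_breakdown_eq by blast
        then show "y \<in> (\<lambda>(c,x). c *s a + x) ` (UNIV \<times> vec.span B)"
          by (intro image_eqI[of _ _ "(k, y - k *s a)"]) auto
      qed
    next
      show "(\<lambda>(c,x). c *s a + x) ` (UNIV \<times> vec.span B) \<subseteq> vec.span (insert a B)"
      proof (clarify)
        fix c x assume "x \<in> vec.span B"
        then show "c *s a + x \<in> vec.span (insert a B)"
          unfolding vec.span_breakdown_eq[of _ a B] by (intro exI[of _ c]) simp
      qed
    qed
    have inj: "inj_on (\<lambda>(c,x). c *s a + x) (UNIV \<times> vec.span B)"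
    proof (rule inj_onI, clarsimp)
      fix c x c' x'
      assume x: "x \<in> vec.span B" and x': "x' \<in> vec.span B" and e: "c *s a + x = c' *s a + x'"
      show "c = c' \<and> x = x'"
      proof (cases "c = c'")
        case True then show ?thesis using e by simp
      next
        case False
        have "c *s a - c' *s a = x' - x" using e by (simp add: algebra_simps)
        then have h: "(c - c') *s a = x' - x" by (simp add: vector_sub_rdistrib)
        have i1: "inverse (c - c') * (c - c') = 1" using False by simp
        have "a = inverse (c - c') *s ((c - c') *s a)" by (simp only: vector_smult_assoc i1 vector_smult_lid)
        also have "\<dots> = inverse (c - c') *s (x' - x)" by (simp only: h)
        finally have "a = inverse (c - c') *s (x' - x)" .
        then have "a \<in> vec.span B" using x x' by (simp add: vec.span_scale vec.span_diff)
        then show ?thesis using anot by simp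
      qed
    qed
    have "card (vec.span (insert a B)) = card ((UNIV::'a set) \<times> vec.span B)"
      unfolding eq using card_image[OF inj] by simp
    also have "\<dots> = CARD('a) * CARD('a) ^ card B" using insert.IH indB by (simp add: card_cartesian_product)
    finally show ?case using insert.hyps by simp
  qed
qed

lemma card_subspace:
  fixes U :: "(('a::{field,finite})^'n) set"
  assumes "vec.subspace U"
  shows "card U = CARD('a) ^ vec.dim U"
proof -
  obtain B where B: "B \<subseteq> U" "vec.independent B" "U \<subseteq> vec.span B" "card B = vec.dim U"
    using vec.basis_exists by blast
  have "vec.span B = U" using B assms vec.span_subspace by blast
  then show ?thesis using card_span_indep[OF B(2)] B(4) by simp
qed

lemma fiber_bound:
  assumes T: "finite T" and SS: "finite SS" and m: "\<And>S. S \<in> SS \<Longrightarrow> m \<le> card {t \<in> T. f t = S}"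
  shows "m * card SS \<le> card T"
proof -
  have "m * card SS = (\<Sum>S\<in>SS. m)" by simp
  also have "\<dots> \<le> (\<Sum>S\<in>SS. card {t \<in> T. f t = S})" using m by (intro sum_mono) auto
  also have "\<dots> = card (\<Union>S\<in>SS. {t \<in> T. f t = S})"
    by (rule card_UN_disjoint[symmetric]) (use SS T in auto)
  also have "\<dots> \<le> card T" using T by (intro card_mono) auto
  finally show ?thesis .
qed

lemma arith_Pa:
  fixes q :: nat assumes "q \<ge> 2"
  shows "(q^4 - 1) * (q^7 - q^5) = ((q - 1) * (q^3 - q^2)) * ((q^3+q^2+q+1)*(q^4+q^3))"
proof -
  have a: "1 \<le> q^4" "q^5 \<le> q^7" "1 \<le> q" "q^2 \<le> q^3" using assms
    by (auto intro!: power_increasing simp: one_le_power)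
  have "int ((q^4 - 1) * (q^7 - q^5)) = int (((q - 1) * (q^3 - q^2)) * ((q^3+q^2+q+1)*(q^4+q^3)))"
    using a by (simp add: of_nat_diff) algebra
  then show ?thesis using of_nat_eq_iff by blast
qed

lemma q_ge2: "CARD('a::{field,finite}) \<ge> 2"
proof -
  have "{0::'a, 1} \<subseteq> UNIV" by simp
  then have "card {0::'a, 1} \<le> CARD('a)" by (intro card_mono) auto
  then show ?thesis by simp
qed

lemma card_nonzero: "card (UNIV - {0::'a::{field,finite}}) = CARD('a) - 1"
  by (simp add: card_Diff_subset)

lemma dim_lt_if_psub:
  fixes U W :: "(('a::field)^'n) set"
  assumes "vec.subspace U" "vec.subspace W" "W \<subseteq> U" "W \<noteq> U"
  shows "vec.dim W < vec.dim U"
proof -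
  have e: "vec.span W = W" "vec.span U = U" using assms(1,2) by simp_all
  have "W \<subset> U" using assms(3,4) by auto
  then have "vec.span W \<subset> vec.span U" unfolding e .
  then show ?thesis using vec.dim_psubset[of W U] by blast
qed

lemma card_psub:
  fixes U W :: "(('a::{field,finite})^'n) set"
  assumes "vec.subspace U" "vec.subspace W" "W \<subseteq> U" "W \<noteq> U" "vec.dim U = Suc k"
  shows "card W \<le> CARD('a) ^ k"
proof -
  have "vec.dim W \<le> k" using dim_lt_if_psub[OF assms(1-4)] assms(5) by simp
  then show ?thesis using card_subspace[OF assms(2)] q_ge2[where 'a='a]
    by (simp add: power_increasing)
qed

lemma card_le_of_dim_le:
  fixes W :: "(('a::{field,finite})^'n) set"
  assumes "vec.subspace W" "vec.dim W \<le> k"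
  shows "card W \<le> CARD('a) ^ k"
  using card_subspace[OF assms(1)] q_ge2[where 'a='a] assms(2) by (simp add: power_increasing)

lemma point_span:
  fixes X :: "'a::field vec7 set"
  assumes "is_point X"
  shows "\<exists>x. x \<noteq> 0 \<and> X = vec.span {x}"
proof -
  have sX: "vec.subspace X" "vec.dim X = 1" using assms unfolding is_point_def psub_of_dim_def by auto
  obtain B where B: "B \<subseteq> X" "vec.independent B" "X \<subseteq> vec.span B" "card B = vec.dim X"
    using vec.basis_exists by blast
  obtain x where "B = {x}" using B(4) sX(2) card_1_singletonE by auto
  moreover have "vec.span B = X" using B sX vec.span_subspace by blast
  moreover have "x \<noteq> 0" using B(2) \<open>B = {x}\<close> vec.dependent_zero by blast
  ultimately show ?thesis by auto
qed

lemma span_eq_of_indep: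
  fixes U B :: "(('a::field)^'n) set"
  assumes "vec.subspace U" "B \<subseteq> U" "vec.independent B" "card B = vec.dim U"
  shows "vec.span B = U"
proof -
  have "vec.span B \<subseteq> U" using assms vec.span_minimal by blast
  moreover have "vec.dim (vec.span B) = vec.dim U" using assms vec.dim_span_eq_card_independent by metis
  ultimately show ?thesis using vec.subspace_dim_equal[of "vec.span B" U] assms(1) by auto
qed

lemma indep_ins:
  fixes S :: "(('a::field)^'n) set"
  assumes "vec.independent S" "a \<notin> vec.span S"
  shows "vec.independent (insert a S) \<and> card (insert a S) = Suc (card S)"
proof -
  have "finite S" using assms(1) vec.finiteI_independent by blast
  moreover have "a \<notin> S" using assms(2) vec.span_base by blast
  ultimately show ?thesis using vec.independent_insertI[OF assms(2,1)] by simp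
qed

lemma span_scale_insert:
  fixes x :: "('a::field)^'n"
  assumes "c \<noteq> 0"
  shows "vec.span (insert (c *s x) A) = vec.span (insert x A)"
proof -
  have 1: "c *s x \<in> vec.span (insert x A)" by (simp add: vec.span_base vec.span_scale)
  have "x = inverse c *s (c *s x)" using assms by (simp add: vector_smult_assoc)
  then have 2: "x \<in> vec.span (insert (c *s x) A)"
    by (metis insertI1 vec.span_base vec.span_scale)
  have "vec.span (insert (c *s x) A) \<subseteq> vec.span (insert x A)"
    using 1 by (meson insert_subset vec.span_mono vec.span_minimal vec.span_superset vec.subspace_span subset_insertI order_trans)
  moreover have "vec.span (insert x A) \<subseteq> vec.span (insert (c *s x) A)"
    using 2 by (meson insert_subset vec.span_mono vec.span_minimal vec.span_superset vec.subspace_span subset_insertI order_trans)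
  ultimately show ?thesis by blast
qed

lemma sub_mem_span1:
  fixes X :: "(('a::field)^'n) set"
  assumes "vec.subspace X" "x \<in> X"
  shows "vec.span {x} \<subseteq> X"
  using assms vec.span_minimal by blast

lemma cancel_le:
  fixes m N T K :: nat
  assumes "m * N \<le> T" "T = m * K" "0 < m"
  shows "N \<le> K"
  using assms by simp

lemma card_Sigma_const:
  assumes "finite A" "\<And>a. a \<in> A \<Longrightarrow> finite (B a) \<and> card (B a) = c"
  shows "card (Sigma A B) = card A * c"
  using assms by (simp add: card_SigmaI)

lemma card_Sigma_le:
  assumes "finite A" "\<And>a. a \<in> A \<Longrightarrow> finite (B a) \<and> card (B a) \<le> c"
  shows "card (Sigma A B) \<le> card A * c"
proof -
  have "card (Sigma A B) = (\<Sum>a\<in>A. card (B a))" using assms by (simp add: card_SigmaI)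
  also have "\<dots> \<le> (\<Sum>a\<in>A. c)" using assms by (intro sum_mono) auto
  finally show ?thesis by simp
qed

lemma card_Sigma_ge:
  assumes "finite A" "\<And>a. a \<in> A \<Longrightarrow> finite (B a) \<and> card (B a) \<ge> c"
  shows "card (Sigma A B) \<ge> card A * c"
proof -
  have "card (Sigma A B) = (\<Sum>a\<in>A. card (B a))" using assms by (simp add: card_SigmaI)
  moreover have "(\<Sum>a\<in>A. c) \<le> (\<Sum>a\<in>A. card (B a))" using assms by (intro sum_mono) auto
  ultimately show ?thesis by simp
qed

lemma indep1:
  fixes a :: "('a::field)^'n"
  assumes "a \<noteq> 0" shows "vec.independent {a} \<and> card {a} = 1"
  using assms vec.independent_insertI[of a "{}"] by (simp add: vec.span_empty)

lemma card_diff_sub: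
  fixes U X :: "(('a::{field,finite})^'n) set"
  assumes "X \<subseteq> U"
  shows "card (U - X) = card U - card X"
  using assms by (simp add: card_Diff_subset)

lemma count_Pb:
  fixes q0 :: "'a::{field,finite} vec7" and W :: "'a vec7 set"
  assumes W: "vec.subspace W" "vec.dim W = 5" and q0: "q0 \<in> W" "q0 \<noteq> 0"
  shows "card {E. is_plane E \<and> q0 \<in> E \<and> E \<subseteq> W} \<le> (CARD('a)^2+1)*(CARD('a)^2+CARD('a)+1)"
proof -
  define q where "q = CARD('a)"
  have q2: "q \<ge> 2" unfolding q_def by (rule q_ge2)
  define Q where "Q = vec.span {q0}"
  have i1: "vec.independent {q0}" "card {q0} = 1" using indep1[OF q0(2)] by auto
  have cQ: "card Q = q" unfolding Q_def q_def using card_span_indep[OF i1(1)] i1(2) by simp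
  have i2: "vec.independent {x, q0} \<and> card {x, q0} = 2" if "x \<notin> Q" for x
    using indep_ins[OF i1(1), of x] that i1(2) unfolding Q_def by simp
  have i3: "vec.independent {y, x, q0} \<and> card {y, x, q0} = 3" if "x \<notin> Q" "y \<notin> vec.span {x, q0}" for x y
    using indep_ins[of "{x, q0}" y] i2[OF that(1)] that(2) by simp
  have cQ2: "card (vec.span {x, q0}) = q^2" if "x \<notin> Q" for x
    using card_span_indep[of "{x,q0}"] i2[OF that] unfolding q_def by simp
  have QsubW: "Q \<subseteq> W" unfolding Q_def using W q0 vec.span_minimal by blast
  have cW: "card W = q^5" using card_subspace[OF W(1)] W(2) unfolding q_def by simp
  define T where "T = Sigma (W - Q) (\<lambda>x. W - vec.span {x, q0})"
  define f where "f = (\<lambda>(x::'a vec7, y::'a vec7). vec.span {y, x, q0})"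
  define SS where "SS = {E. is_plane E \<and> q0 \<in> E \<and> E \<subseteq> W}"
  have "card T = card (W - Q) * (q^5 - q^2)" unfolding T_def
  proof (rule card_Sigma_const)
    fix x assume x: "x \<in> W - Q"
    have sub: "vec.span {x, q0} \<subseteq> W" using x q0 W vec.span_minimal by (metis Diff_iff empty_subsetI insert_subset)
    show "finite (W - vec.span {x, q0}) \<and> card (W - vec.span {x, q0}) = q^5 - q^2"
      using card_diff_sub[OF sub] cW cQ2[of x] x by simp
  qed simp
  then have cT: "card T = (q^5 - q) * (q^5 - q^2)" using card_diff_sub[OF QsubW] cW cQ by simp
  have fib: "(q^3 - q) * (q^3 - q^2) \<le> card {t \<in> T. f t = E}" if E: "E \<in> SS" for E
  proof -
    have sE: "vec.subspace E" "vec.dim E = 3" "q0 \<in> E" "E \<subseteq> W"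
      using E unfolding SS_def is_plane_def psub_of_dim_def by auto
    have cE: "card E = q^3" using card_subspace[OF sE(1)] sE(2) unfolding q_def by simp
    have QE: "Q \<subseteq> E" unfolding Q_def using sE vec.span_minimal by blast
    have "Sigma (E - Q) (\<lambda>x. E - vec.span {x, q0}) \<subseteq> {t \<in> T. f t = E}"
    proof clarify
      fix x y assume x: "x \<in> E" "x \<notin> Q" and y: "y \<in> E" "y \<notin> vec.span {x, q0}"
      have "vec.span {y, x, q0} = E"
        using span_eq_of_indep[OF sE(1), of "{y,x,q0}"] i3[OF x(2) y(2)] sE x y by simp
      then show "(x, y) \<in> T \<and> f (x, y) = E" unfolding T_def f_def using x y sE by auto
    qed
    moreover have "finite {t \<in> T. f t = E}" by simp
    ultimately have "card (Sigma (E - Q) (\<lambda>x. E - vec.span {x, q0})) \<le> card {t \<in> T. f t = E}"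
      by (rule card_mono[rotated])
    moreover have "card (Sigma (E - Q) (\<lambda>x. E - vec.span {x, q0})) = card (E - Q) * (q^3 - q^2)"
    proof (rule card_Sigma_const)
      fix x assume x: "x \<in> E - Q"
      have sub: "vec.span {x, q0} \<subseteq> E" using x sE vec.span_minimal by (metis Diff_iff empty_subsetI insert_subset)
      show "finite (E - vec.span {x, q0}) \<and> card (E - vec.span {x, q0}) = q^3 - q^2"
        using card_diff_sub[OF sub] cE cQ2[of x] x by simp
    qed simp
    moreover have "card (E - Q) = q^3 - q" using card_diff_sub[OF QE] cE cQ by simp
    ultimately show ?thesis by simp
  qed
  have m1: "(q^3 - q) * (q^3 - q^2) * card SS \<le> card T"
    by (rule fiber_bound[of T SS _ f]) (use fib in auto)
  have e1: "(q^5 - q) * (q^5 - q^2) = ((q^3 - q) * (q^3 - q^2)) * ((q^2+1)*(q^2+q+1))"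
  proof -
    have a: "q \<le> q^3" "q^2 \<le> q^5" "q \<le> q^5" "q^2 \<le> q^3" using q2
      by (auto intro!: power_increasing[where a=q and n=1, simplified] power_increasing simp: )
    have "int ((q^5 - q) * (q^5 - q^2)) = int (((q^3 - q) * (q^3 - q^2)) * ((q^2+1)*(q^2+q+1)))"
      using a by (simp add: of_nat_diff) algebra
    then show ?thesis using of_nat_eq_iff by blast
  qed
  have pos: "0 < (q^3 - q) * (q^3 - q^2)"
  proof -
    have "q < q^3" "q^2 < q^3" using q2 by (auto intro!: power_strict_increasing[where a=q and n=1, simplified] power_strict_increasing)
    then show ?thesis by simp
  qed
  have "card SS \<le> (q^2+1)*(q^2+q+1)" using cancel_le[OF m1 cT[unfolded e1] pos] .
  then show ?thesis unfolding SS_def q_def .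
qed

lemma notin_span1:
  fixes S :: "('a::field vec7) set"
  assumes "vec.subspace S" "q0 \<notin> S" "v \<in> S" "v \<noteq> 0"
  shows "v \<notin> vec.span {q0}"
proof
  assume "v \<in> vec.span {q0}"
  then obtain k where k: "v = k *s q0" unfolding vec.span_singleton by auto
  then have "k \<noteq> 0" using assms(4) by auto
  then have "q0 = inverse k *s v" using k by (simp add: vector_smult_assoc)
  then have "q0 \<in> S" using assms(1,3) vec.subspace_scale by metis
  then show False using assms(2) by simp
qed

lemma dim_V5:
  fixes S :: "('a::field vec7) set"
  assumes "vec.subspace S" "q0 \<notin> S"
  shows "vec.subspace (vec.span (insert q0 S)) \<and> vec.dim (vec.span (insert q0 S)) = vec.dim S + 1"
proof -
  have e: "vec.span S = S" using assms(1) by simp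
  have "q0 \<notin> vec.span S" unfolding e using assms(2) .
  then show ?thesis using assms vec.dim_insert[of q0 S] by simp
qed

lemma count_Pa:
  fixes q0 :: "'a::{field,finite} vec7" and S :: "'a vec7 set"
  assumes S: "vec.subspace S" "vec.dim S = 4" and q0: "q0 \<notin> S"
  shows "card {E. is_plane E \<and> q0 \<in> E \<and> E \<inter> S \<noteq> {0} \<and> \<not> E \<subseteq> vec.span (insert q0 S)}
           \<le> (CARD('a)^3+CARD('a)^2+CARD('a)+1)*(CARD('a)^4+CARD('a)^3)"
proof -
  define q where "q = CARD('a)"
  have q2: "q \<ge> 2" unfolding q_def by (rule q_ge2)
  define V5 where "V5 = vec.span (insert q0 S)"
  have sV5: "vec.subspace V5" "vec.dim V5 = 5" using dim_V5[OF S(1) q0] S(2) unfolding V5_def by auto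
  have cV5: "card V5 = q^5" using card_subspace[OF sV5(1)] sV5(2) unfolding q_def by simp
  have SV5: "S \<subseteq> V5" "q0 \<in> V5" unfolding V5_def by (auto intro: vec.span_base)
  have cS: "card S = q^4" using card_subspace[OF S(1)] S(2) unfolding q_def by simp
  have q00: "q0 \<noteq> 0" using q0 S(1) vec.subspace_0 by blast
  have i1: "vec.independent {q0}" "card {q0} = 1" using indep1[OF q00] by auto
  have cUNIV: "card (UNIV :: 'a vec7 set) = q^7" unfolding q_def by simp
  define T where "T = (S - {0}) \<times> (UNIV - V5)"
  define f where "f = (\<lambda>(r::'a vec7, x::'a vec7). vec.span {x, r, q0})"
  define SS where "SS = {E. is_plane E \<and> q0 \<in> E \<and> E \<inter> S \<noteq> {0} \<and> \<not> E \<subseteq> V5}"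
  have cT: "card T = (q^4 - 1) * (q^7 - q^5)"
  proof -
    have "card (S - {0}) = q^4 - 1" using card_diff_sub[of "{0}" S] cS vec.subspace_0[OF S(1)] by simp
    moreover have "card (UNIV - V5) = q^7 - q^5" using card_diff_sub[of V5 UNIV] cV5 cUNIV by simp
    ultimately show ?thesis unfolding T_def by (simp add: card_cartesian_product)
  qed
  have fib: "(q - 1) * (q^3 - q^2) \<le> card {t \<in> T. f t = E}" if E: "E \<in> SS" for E
  proof -
    have sE: "vec.subspace E" "vec.dim E = 3" "q0 \<in> E" "\<not> E \<subseteq> V5" "E \<inter> S \<noteq> {0}"
      using E unfolding SS_def is_plane_def psub_of_dim_def by auto
    obtain r where r: "r \<in> E" "r \<in> S" "r \<noteq> 0" using sE(5) sE(1) S(1) vec.subspace_0 by blast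
    have cE: "card E = q^3" using card_subspace[OF sE(1)] sE(2) unfolding q_def by simp
    have sEV: "vec.subspace (E \<inter> V5)" using sE(1) sV5(1) vec.subspace_inter by blast
    have cEV: "card (E \<inter> V5) \<le> q^2"
      using card_psub[OF sE(1) sEV, of 2] sE(2,4) unfolding q_def by auto
    have cEmV: "card (E - V5) \<ge> q^3 - q^2"
    proof -
      have "card (E - V5) = card E - card (E \<inter> V5)"
        using card_diff_sub[of "E \<inter> V5" E] by (simp add: Diff_Int)
      then show ?thesis using cE cEV by simp
    qed
    define g where "g = (\<lambda>(c::'a, x::'a vec7). (c *s r, x))"
    have inj: "inj_on g ((UNIV - {0}) \<times> (E - V5))"
      unfolding g_def using r(3) by (auto intro!: inj_onI)
    have mem: "g (c, x) \<in> {t \<in> T. f t = E}" if c: "c \<noteq> 0" and x: "x \<in> E" "x \<notin> V5" for c x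
    proof -
      have cr: "c *s r \<in> S" "c *s r \<in> E" "c *s r \<noteq> 0"
        using c r S(1) sE(1) by (auto intro: vec.subspace_scale)
      have i2: "vec.independent {c *s r, q0} \<and> card {c *s r, q0} = 2"
        using indep_ins[OF i1(1), of "c *s r"] notin_span1[OF S(1) q0 cr(1) cr(3)] i1(2) by simp
      have "vec.span {c *s r, q0} \<subseteq> V5"
        using cr(1) SV5 sV5(1) vec.span_minimal[of "{c *s r, q0}" V5] by blast
      then have "x \<notin> vec.span {c *s r, q0}" using x by blast
      then have i3: "vec.independent {x, c *s r, q0} \<and> card {x, c *s r, q0} = 3"
        using indep_ins[of "{c *s r, q0}" x] i2 by simp
      have "vec.span {x, c *s r, q0} = E"
        using span_eq_of_indep[OF sE(1), of "{x, c *s r, q0}"] i3 sE cr x by simp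
      then show "g (c, x) \<in> {t \<in> T. f t = E}"
        unfolding g_def T_def f_def using cr x by auto
    qed
    have "g ` ((UNIV - {0}) \<times> (E - V5)) \<subseteq> {t \<in> T. f t = E}"
      using mem by auto
    then have "card (g ` ((UNIV - {0}) \<times> (E - V5))) \<le> card {t \<in> T. f t = E}"
      by (intro card_mono) auto
    moreover have "card (g ` ((UNIV - {0}) \<times> (E - V5))) = (q - 1) * card (E - V5)"
      using card_image[OF inj] card_nonzero[where 'a='a] unfolding q_def by (simp add: card_cartesian_product)
    moreover have "(q - 1) * (q^3 - q^2) \<le> (q - 1) * card (E - V5)"
      using cEmV by simp
    ultimately show ?thesis by linarith
  qed
  have m1: "(q - 1) * (q^3 - q^2) * card SS \<le> card T"
    by (rule fiber_bound[of T SS _ f]) (use fib in auto)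
  have e1: "(q^4 - 1) * (q^7 - q^5) = ((q - 1) * (q^3 - q^2)) * ((q^3+q^2+q+1)*(q^4+q^3))"
  proof -
    have a: "1 \<le> q^4" "q^5 \<le> q^7" "1 \<le> q" "q^2 \<le> q^3" using q2
      by (auto intro!: power_increasing simp: one_le_power)
    have "int ((q^4 - 1) * (q^7 - q^5)) = int (((q - 1) * (q^3 - q^2)) * ((q^3+q^2+q+1)*(q^4+q^3)))"
      using a by (simp add: of_nat_diff) algebra
    then show ?thesis using of_nat_eq_iff by blast
  qed
  have pos: "0 < (q - 1) * (q^3 - q^2)"
  proof -
    have "q^2 < q^3" using q2 by (auto intro!: power_strict_increasing)
    then show ?thesis using q2 by simp
  qed
  have "card SS \<le> (q^3+q^2+q+1)*(q^4+q^3)" using cancel_le[OF m1 cT[unfolded e1] pos] .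
  then show ?thesis unfolding SS_def V5_def q_def .
qed

lemma count_S1:
  fixes q0 p0 :: "'a::{field,finite} vec7" and S1 :: "'a vec7 set"
  assumes S1: "vec.subspace S1" "vec.dim S1 = 4" and q0: "q0 \<notin> S1" and p0: "p0 \<in> S1" "p0 \<noteq> 0"
  shows "card {S. is_solid S \<and> q0 \<in> S \<and> p0 \<in> S \<and> S \<inter> vec.span (insert q0 S1) \<subseteq> vec.span {q0, p0}}
           \<le> CARD('a)^6 + CARD('a)^5"
proof -
  define q where "q = CARD('a)"
  have q2: "q \<ge> 2" unfolding q_def by (rule q_ge2)
  define V5 where "V5 = vec.span (insert q0 S1)"
  have sV5: "vec.subspace V5" "vec.dim V5 = 5" using dim_V5[OF S1(1) q0] S1(2) unfolding V5_def by auto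
  have cV5: "card V5 = q^5" using card_subspace[OF sV5(1)] sV5(2) unfolding q_def by simp
  have SV5: "S1 \<subseteq> V5" "q0 \<in> V5" unfolding V5_def by (auto intro: vec.span_base)
  have cUNIV: "card (UNIV :: 'a vec7 set) = q^7" unfolding q_def by simp
  have i1: "vec.independent {p0}" "card {p0} = 1" using indep1[OF p0(2)] by auto
  have "vec.span {p0} \<subseteq> S1" using S1(1) p0 vec.span_minimal by blast
  then have "q0 \<notin> vec.span {p0}" using q0 by blast
  then have i2: "vec.independent {q0, p0}" "card {q0, p0} = 2" using indep_ins[OF i1(1), of q0] i1(2) by auto
  have QPV: "vec.span {q0, p0} \<subseteq> V5" using SV5 p0 sV5(1) vec.span_minimal[of "{q0,p0}" V5] by blast
  have cQP: "card (vec.span {q0, p0}) = q^2" using card_span_indep[OF i2(1)] i2(2) unfolding q_def by simp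
  have i3: "vec.independent {x, q0, p0} \<and> card {x, q0, p0} = 3" if "x \<notin> V5" for x
    using indep_ins[OF i2(1), of x] i2(2) that QPV by auto
  have i4: "vec.independent {y, x, q0, p0} \<and> card {y, x, q0, p0} = 4"
    if "x \<notin> V5" "y \<notin> vec.span {x, q0, p0}" for x y
    using indep_ins[of "{x, q0, p0}" y] i3[OF that(1)] that(2) by auto
  define T where "T = (UNIV - V5) \<times> (UNIV - V5)"
  define f where "f = (\<lambda>(x::'a vec7, y::'a vec7). vec.span {y, x, q0, p0})"
  define SS where "SS = {S. is_solid S \<and> q0 \<in> S \<and> p0 \<in> S \<and> S \<inter> V5 \<subseteq> vec.span {q0, p0}}"
  have cT: "card T = (q^7 - q^5) * (q^7 - q^5)"
  proof -
    have "card (UNIV - V5) = q^7 - q^5" using card_diff_sub[of V5 UNIV] cV5 cUNIV by simp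
    then show ?thesis unfolding T_def by (simp add: card_cartesian_product)
  qed
  have fib: "(q^4 - q^2) * (q^4 - q^3) \<le> card {t \<in> T. f t = S}" if S: "S \<in> SS" for S
  proof -
    have sS: "vec.subspace S" "vec.dim S = 4" "q0 \<in> S" "p0 \<in> S" "S \<inter> V5 \<subseteq> vec.span {q0, p0}"
      using S unfolding SS_def is_solid_def psub_of_dim_def by auto
    have cS: "card S = q^4" using card_subspace[OF sS(1)] sS(2) unfolding q_def by simp
    have "card (S \<inter> V5) \<le> q^2" using card_mono[OF _ sS(5)] cQP by simp
    then have cSV: "card (S - V5) \<ge> q^4 - q^2"
      using card_diff_sub[of "S \<inter> V5" S] cS by (simp add: Diff_Int)
    have inner: "card (S - vec.span {x, q0, p0}) = q^4 - q^3" if x: "x \<in> S" "x \<notin> V5" for x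
    proof -
      have "vec.span {x, q0, p0} \<subseteq> S" using x sS vec.span_minimal[of "{x,q0,p0}" S] by blast
      moreover have "card (vec.span {x, q0, p0}) = q^3" using card_span_indep i3[OF x(2)] unfolding q_def by metis
      ultimately show ?thesis using card_diff_sub cS by metis
    qed
    have "Sigma (S - V5) (\<lambda>x. S - vec.span {x, q0, p0}) \<subseteq> {t \<in> T. f t = S}"
    proof -
      have "(x, y) \<in> {t \<in> T. f t = S}" if x: "x \<in> S" "x \<notin> V5" and y: "y \<in> S" "y \<notin> vec.span {x, q0, p0}" for x y
      proof -
        have "vec.span {q0, p0} \<subseteq> vec.span {x, q0, p0}" by (intro vec.span_mono) auto
        then have "y \<notin> V5" using y sS(5) by blast
        moreover have "vec.span {y, x, q0, p0} = S"
          using span_eq_of_indep[OF sS(1), of "{y, x, q0, p0}"] i4[OF x(2) y(2)] sS x y by simp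
        ultimately show ?thesis unfolding T_def f_def using x by auto
      qed
      then show ?thesis by auto
    qed
    then have "card (Sigma (S - V5) (\<lambda>x. S - vec.span {x, q0, p0})) \<le> card {t \<in> T. f t = S}"
      by (intro card_mono) auto
    moreover have "card (Sigma (S - V5) (\<lambda>x. S - vec.span {x, q0, p0})) = card (S - V5) * (q^4 - q^3)"
      by (rule card_Sigma_const) (use inner in auto)
    moreover have "(q^4 - q^2) * (q^4 - q^3) \<le> card (S - V5) * (q^4 - q^3)" using cSV by simp
    ultimately show ?thesis by linarith
  qed
  have m1: "(q^4 - q^2) * (q^4 - q^3) * card SS \<le> card T"
    by (rule fiber_bound[of T SS _ f]) (use fib in auto)
  have e1: "(q^7 - q^5) * (q^7 - q^5) = ((q^4 - q^2) * (q^4 - q^3)) * (q^6 + q^5)"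
  proof -
    have a: "q^5 \<le> q^7" "q^2 \<le> q^4" "q^3 \<le> q^4" using q2
      by (auto intro!: power_increasing)
    have "int ((q^7 - q^5) * (q^7 - q^5)) = int (((q^4 - q^2) * (q^4 - q^3)) * (q^6 + q^5))"
      using a by (simp add: of_nat_diff) algebra
    then show ?thesis using of_nat_eq_iff by blast
  qed
  have pos: "0 < (q^4 - q^2) * (q^4 - q^3)"
  proof -
    have "q^2 < q^4" "q^3 < q^4" using q2 by (auto intro!: power_strict_increasing)
    then show ?thesis by simp
  qed
  have "card SS \<le> q^6 + q^5" using cancel_le[OF m1 cT[unfolded e1] pos] .
  then show ?thesis unfolding SS_def V5_def q_def .
qed

lemma scale_mem:
  fixes E P :: "('a::field vec7) set"
  assumes "vec.subspace E" "vec.subspace P" "r \<in> E" "r \<notin> P" "c \<noteq> 0"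
  shows "c *s r \<in> E \<and> c *s r \<notin> P"
proof -
  have "c *s r \<in> E" using assms vec.subspace_scale by blast
  moreover have "c *s r \<notin> P"
  proof
    assume "c *s r \<in> P"
    then have "inverse c *s (c *s r) \<in> P" using assms(2) vec.subspace_scale by blast
    then show False using assms(4,5) by (simp add: vector_smult_assoc)
  qed
  ultimately show ?thesis by simp
qed

lemma count_S2a:
  fixes q0 :: "'a::{field,finite} vec7" and E1 E2 E3 P :: "'a vec7 set"
  assumes E: "vec.subspace E1" "vec.dim E1 = 3" "vec.subspace E2" "vec.dim E2 = 3"
      "vec.subspace E3" "vec.dim E3 = 3"
    and P: "vec.subspace P" "vec.dim P = 1" "P \<subseteq> E1" "P \<subseteq> E2" "P \<subseteq> E3"
  shows "card {S. is_solid S \<and> (\<exists>r1\<in>E1 - P. \<exists>r2\<in>E2 - P. \<exists>r3\<in>E3 - P. S = vec.span {q0, r1, r2, r3})}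
           \<le> (CARD('a)^2 + CARD('a))^3"
proof -
  define q where "q = CARD('a)"
  have q2: "q \<ge> 2" unfolding q_def by (rule q_ge2)
  have cP: "card P = q" using card_subspace[OF P(1)] P(2) unfolding q_def by simp
  have cE: "card (Ei - P) = q^3 - q" if "vec.subspace Ei" "vec.dim Ei = 3" "P \<subseteq> Ei" for Ei
    using card_subspace[OF that(1)] that(2) card_diff_sub[OF that(3)] cP unfolding q_def by simp
  define T where "T = (E1 - P) \<times> (E2 - P) \<times> (E3 - P)"
  define f where "f = (\<lambda>(r1::'a vec7, r2::'a vec7, r3::'a vec7). vec.span {q0, r1, r2, r3})"
  define SS where "SS = {S. is_solid S \<and> (\<exists>r1\<in>E1 - P. \<exists>r2\<in>E2 - P. \<exists>r3\<in>E3 - P. S = vec.span {q0, r1, r2, r3})}"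
  have cT: "card T = (q^3 - q) * (q^3 - q) * (q^3 - q)"
    unfolding T_def using cE[OF E(1,2) P(3)] cE[OF E(3,4) P(4)] cE[OF E(5,6) P(5)]
    by (simp add: card_cartesian_product)
  have fib: "(q - 1) * (q - 1) * (q - 1) \<le> card {t \<in> T. f t = S}" if S: "S \<in> SS" for S
  proof -
    obtain r1 r2 r3 where r: "r1 \<in> E1" "r1 \<notin> P" "r2 \<in> E2" "r2 \<notin> P" "r3 \<in> E3" "r3 \<notin> P"
      and Seq: "S = vec.span {q0, r1, r2, r3}" using S unfolding SS_def by auto
    have nz: "r1 \<noteq> 0" "r2 \<noteq> 0" "r3 \<noteq> 0" using r vec.subspace_0[OF P(1)] by auto
    define U where "U = (UNIV - {0::'a})"
    define g where "g = (\<lambda>(c1::'a, c2::'a, c3::'a). (c1 *s r1, c2 *s r2, c3 *s r3))"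
    have inj: "inj_on g (U \<times> U \<times> U)" unfolding g_def using nz by (auto intro!: inj_onI)
    have mem: "g (c1, c2, c3) \<in> {t \<in> T. f t = S}" if c: "c1 \<noteq> 0" "c2 \<noteq> 0" "c3 \<noteq> 0" for c1 c2 c3
    proof -
      have m: "c1 *s r1 \<in> E1 - P" "c2 *s r2 \<in> E2 - P" "c3 *s r3 \<in> E3 - P"
        using scale_mem[OF E(1) P(1) r(1,2) c(1)] scale_mem[OF E(3) P(1) r(3,4) c(2)]
          scale_mem[OF E(5) P(1) r(5,6) c(3)] by auto
      have "vec.span {q0, c1 *s r1, c2 *s r2, c3 *s r3} = vec.span (insert (c1 *s r1) {q0, c2 *s r2, c3 *s r3})"
        by (rule arg_cong[where f=vec.span]) auto
      also have "\<dots> = vec.span (insert r1 {q0, c2 *s r2, c3 *s r3})" by (rule span_scale_insert[OF c(1)])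
      also have "\<dots> = vec.span (insert (c2 *s r2) {q0, r1, c3 *s r3})"
        by (rule arg_cong[where f=vec.span]) auto
      also have "\<dots> = vec.span (insert r2 {q0, r1, c3 *s r3})" by (rule span_scale_insert[OF c(2)])
      also have "\<dots> = vec.span (insert (c3 *s r3) {q0, r1, r2})"
        by (rule arg_cong[where f=vec.span]) auto
      also have "\<dots> = vec.span (insert r3 {q0, r1, r2})" by (rule span_scale_insert[OF c(3)])
      also have "\<dots> = vec.span {q0, r1, r2, r3}"
        by (rule arg_cong[where f=vec.span]) auto
      finally have "f (g (c1, c2, c3)) = S" unfolding f_def g_def Seq by simp
      then show ?thesis using m unfolding T_def g_def by auto
    qed
    have "g ` (U \<times> U \<times> U) \<subseteq> {t \<in> T. f t = S}" using mem unfolding U_def by auto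
    then have "card (g ` (U \<times> U \<times> U)) \<le> card {t \<in> T. f t = S}" by (intro card_mono) auto
    moreover have "card (g ` (U \<times> U \<times> U)) = (q - 1) * (q - 1) * (q - 1)"
      using card_image[OF inj] card_nonzero[where 'a='a] unfolding q_def U_def by (simp add: card_cartesian_product)
    ultimately show ?thesis by simp
  qed
  have m1: "(q - 1) * (q - 1) * (q - 1) * card SS \<le> card T"
    by (rule fiber_bound[of T SS _ f]) (use fib in auto)
  have e1: "(q^3 - q) * (q^3 - q) * (q^3 - q) = ((q - 1) * (q - 1) * (q - 1)) * (q^2 + q)^3"
  proof -
    have a: "q \<le> q^3" "1 \<le> q" using q2 by (auto intro!: power_increasing[where n=1, simplified])
    have "int ((q^3 - q) * (q^3 - q) * (q^3 - q)) = int (((q - 1) * (q - 1) * (q - 1)) * (q^2 + q)^3)"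
      using a by (simp add: of_nat_diff) algebra
    then show ?thesis using of_nat_eq_iff by blast
  qed
  have pos: "0 < (q - 1) * (q - 1) * (q - 1)" using q2 by simp
  have "card SS \<le> (q^2 + q)^3" using cancel_le[OF m1 cT[unfolded e1] pos] .
  then show ?thesis unfolding SS_def q_def .
qed

lemma cancel_le2:
  fixes m N T K :: nat
  assumes "m * N \<le> T" "T \<le> m * K" "0 < m"
  shows "N \<le> K"
  using assms by (meson le_trans mult_le_cancel1)

lemma dim_union_planes:
  fixes E1 E2 P :: "'a::field vec7 set"
  assumes "vec.subspace E1" "vec.dim E1 = 3" "vec.subspace E2" "vec.dim E2 = 3"
    "vec.dim P = 1" "E1 \<inter> E2 = P"
  shows "vec.dim (vec.span (E1 \<union> E2)) = 5"
proof -
  have "vec.span (E1 \<union> E2) = {x + y |x y. x \<in> E1 \<and> y \<in> E2}"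
  proof -
    have e: "vec.span E1 = E1" "vec.span E2 = E2" using assms(1,3) by simp_all
    show ?thesis using vec.span_Un[of E1 E2] unfolding e .
  qed
  then show ?thesis using vec.dim_sums_Int[OF assms(1,3)] assms by simp
qed

lemma indep_pair13:
  fixes E1 E3 P :: "'a::field vec7 set"
  assumes "vec.subspace E1" "vec.subspace E3" "vec.subspace P" "E1 \<inter> E3 = P"
    "q0 \<notin> vec.span (E1 \<union> E3)" "r1 \<in> E1" "r1 \<notin> P" "r3 \<in> E3" "r3 \<notin> P"
  shows "vec.independent {q0, r1, r3} \<and> card {q0, r1, r3} = 3"
proof -
  have "r3 \<noteq> 0" using assms(3,9) vec.subspace_0 by blast
  then have i1: "vec.independent {r3}" "card {r3} = 1" using indep1 by auto
  have "vec.span {r3} \<subseteq> E3" using assms(2,8) vec.span_minimal by blast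
  then have "r1 \<notin> vec.span {r3}" using assms(4,6,7) by blast
  then have i2: "vec.independent {r1, r3}" "card {r1, r3} = 2" using indep_ins[OF i1(1)] i1(2) by auto
  have "vec.span {r1, r3} \<subseteq> vec.span (E1 \<union> E3)" using assms(6,8) by (intro vec.span_mono) auto
  then have "q0 \<notin> vec.span {r1, r3}" using assms(5) by blast
  then show ?thesis using indep_ins[OF i2(1)] i2(2) by auto
qed

lemma W_not_E1:
  fixes E1 E2 P :: "'a::field vec7 set"
  assumes "vec.subspace E1" "vec.dim E1 = 3" "vec.subspace E2" "vec.dim E2 = 3"
    "vec.dim P = 1" "E1 \<inter> E2 = P" "q0 \<notin> vec.span (E1 \<union> E2)"
  shows "\<not> E1 \<subseteq> vec.span (insert q0 (insert r3 E2))"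
proof
  define W where "W = vec.span (insert q0 (insert r3 E2))"
  assume "E1 \<subseteq> vec.span (insert q0 (insert r3 E2))"
  moreover have "E2 \<subseteq> W"
  proof -
    have "E2 \<subseteq> insert q0 (insert r3 E2)" by blast
    then show "E2 \<subseteq> W" unfolding W_def by (rule order_trans[OF _ vec.span_superset])
  qed
  ultimately have "E1 \<union> E2 \<subseteq> W" unfolding W_def by blast
  then have sub: "vec.span (E1 \<union> E2) \<subseteq> W" unfolding W_def by (rule vec.span_minimal[OF _ vec.subspace_span])
  have "vec.dim W \<le> 5"
  proof -
    have "vec.dim (insert r3 E2) \<le> vec.dim E2 + 1" using vec.dim_insert[of r3 E2] by simp
    moreover have "vec.dim (insert q0 (insert r3 E2)) \<le> vec.dim (insert r3 E2) + 1"
      using vec.dim_insert[of q0 "insert r3 E2"] by simp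
    ultimately show ?thesis unfolding W_def using assms(4) by simp
  qed
  then have "vec.span (E1 \<union> E2) = W"
    using vec.subspace_dim_equal[OF vec.subspace_span vec.subspace_span[of "insert q0 (insert r3 E2)"]]
      sub dim_union_planes[OF assms(1-6)] unfolding W_def by simp
  moreover have "q0 \<in> W" unfolding W_def by (intro vec.span_base) simp
  ultimately show False using assms(7) by simp
qed


lemma count_S2b:
  fixes q0 :: "'a::{field,finite} vec7" and E1 E2 E3 P :: "'a vec7 set"
  assumes E: "vec.subspace E1" "vec.dim E1 = 3" "vec.subspace E2" "vec.dim E2 = 3"
      "vec.subspace E3" "vec.dim E3 = 3"
    and P: "vec.subspace P" "vec.dim P = 1" "P \<subseteq> E2"
    and m12: "E1 \<inter> E2 = P" and m13: "E1 \<inter> E3 = P"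
    and q12: "q0 \<notin> vec.span (E1 \<union> E2)" and q13: "q0 \<notin> vec.span (E1 \<union> E3)"
  shows "card {S. is_solid S \<and> q0 \<in> S \<and> (\<exists>r1 r3. r1 \<in> E1 - P \<and> r3 \<in> E3 - P \<and>
              r1 \<in> vec.span (insert q0 (insert r3 E2)) \<and> r1 \<in> S \<and> r3 \<in> S)}
           \<le> (CARD('a)^3 + CARD('a)^2) * (CARD('a)^3 + CARD('a)^2 + CARD('a) + 1)"
proof -
  define q where "q = CARD('a)"
  have q2: "q \<ge> 2" unfolding q_def by (rule q_ge2)
  have cP: "card P = q" using card_subspace[OF P(1)] P(2) unfolding q_def by simp
  have cUNIV: "card (UNIV :: 'a vec7 set) = q^7" unfolding q_def by simp
  have P13: "P \<subseteq> E1" "P \<subseteq> E3" using m13 by auto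
  define W where "W = (\<lambda>r3. vec.span (insert q0 (insert r3 E2)))"
  have i3: "vec.independent {q0, r1, r3} \<and> card {q0, r1, r3} = 3"
    if "r1 \<in> E1" "r1 \<notin> P" "r3 \<in> E3" "r3 \<notin> P" for r1 r3
    using indep_pair13[OF E(1,5) P(1) m13 q13 that] .
  have i4: "vec.independent {x, q0, r1, r3} \<and> card {x, q0, r1, r3} = 4"
    if "r1 \<in> E1" "r1 \<notin> P" "r3 \<in> E3" "r3 \<notin> P" "x \<notin> vec.span {q0, r1, r3}" for r1 r3 x
    using indep_ins[of "{q0, r1, r3}" x] i3[OF that(1-4)] that(5) by auto
  have cpi: "card (vec.span {q0, r1, r3}) = q^3"
    if "r1 \<in> E1" "r1 \<notin> P" "r3 \<in> E3" "r3 \<notin> P" for r1 r3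
    using card_span_indep i3[OF that] unfolding q_def by metis
  define T where "T = Sigma (E3 - P) (\<lambda>r3. Sigma ((E1 \<inter> W r3) - P) (\<lambda>r1. UNIV - vec.span {q0, r1, r3}))"
  define f where "f = (\<lambda>(r3::'a vec7, r1::'a vec7, x::'a vec7). vec.span {x, q0, r1, r3})"
  define SS where "SS = {S. is_solid S \<and> q0 \<in> S \<and> (\<exists>r1 r3. r1 \<in> E1 - P \<and> r3 \<in> E3 - P \<and>
              r1 \<in> W r3 \<and> r1 \<in> S \<and> r3 \<in> S)}"
  have cT: "card T \<le> (q^3 - q) * ((q^2 - q) * (q^7 - q^3))"
  proof -
    have c3: "card (E3 - P) = q^3 - q"
      using card_subspace[OF E(5)] E(6) card_diff_sub[OF P13(2)] cP unfolding q_def by simp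
    have inner: "card (Sigma ((E1 \<inter> W r3) - P) (\<lambda>r1. UNIV - vec.span {q0, r1, r3})) \<le> (q^2 - q) * (q^7 - q^3)"
      if r3: "r3 \<in> E3 - P" for r3
    proof -
      have sEW: "vec.subspace (E1 \<inter> W r3)" unfolding W_def by (rule vec.subspace_inter[OF E(1) vec.subspace_span])
      have "E1 \<inter> W r3 \<noteq> E1" using W_not_E1[OF E(1-4) P(2) m12 q12, of r3] unfolding W_def by blast
      then have "card (E1 \<inter> W r3) \<le> q^2" using card_psub[OF E(1) sEW, of 2] E(2) unfolding q_def by auto
      moreover have "P \<subseteq> E1 \<inter> W r3"
      proof -
        have "E2 \<subseteq> insert q0 (insert r3 E2)" by blast
        then have "E2 \<subseteq> W r3" unfolding W_def by (rule order_trans[OF _ vec.span_superset])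
        then show ?thesis using P13(1) P(3) by blast
      qed
      ultimately have "card ((E1 \<inter> W r3) - P) \<le> q^2 - q" using card_diff_sub[of P "E1 \<inter> W r3"] cP by simp
      moreover have "card (UNIV - vec.span {q0, r1, r3}) = q^7 - q^3" if "r1 \<in> (E1 \<inter> W r3) - P" for r1
        using card_diff_sub[of "vec.span {q0, r1, r3}" UNIV] cUNIV cpi[of r1 r3] that r3 by simp
      ultimately have "card (Sigma ((E1 \<inter> W r3) - P) (\<lambda>r1. UNIV - vec.span {q0, r1, r3})) \<le> card ((E1 \<inter> W r3) - P) * (q^7 - q^3)"
        by (intro card_Sigma_le) auto
      also have "\<dots> \<le> (q^2 - q) * (q^7 - q^3)" using \<open>card ((E1 \<inter> W r3) - P) \<le> q^2 - q\<close> by simp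
      finally show ?thesis .
    qed
    have "card T \<le> card (E3 - P) * ((q^2 - q) * (q^7 - q^3))"
      unfolding T_def by (rule card_Sigma_le) (use inner in auto)
    then show ?thesis using c3 by simp
  qed
  have fib: "(q - 1) * (q - 1) * (q^4 - q^3) \<le> card {t \<in> T. f t = S}" if S: "S \<in> SS" for S
  proof -
    obtain r1 r3 where r: "r1 \<in> E1" "r1 \<notin> P" "r3 \<in> E3" "r3 \<notin> P" "r1 \<in> W r3" "r1 \<in> S" "r3 \<in> S"
      and sS: "vec.subspace S" "vec.dim S = 4" "q0 \<in> S"
      using S unfolding SS_def is_solid_def psub_of_dim_def by auto
    have nz: "r1 \<noteq> 0" "r3 \<noteq> 0" using r vec.subspace_0[OF P(1)] by auto
    have cS: "card S = q^4" using card_subspace[OF sS(1)] sS(2) unfolding q_def by simp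
    have piS: "vec.span {q0, r1, r3} \<subseteq> S" using sS r vec.span_minimal[of "{q0, r1, r3}" S] by blast
    have cSpi: "card (S - vec.span {q0, r1, r3}) = q^4 - q^3"
      using card_diff_sub[OF piS] cS cpi[OF r(1-4)] by simp
    define U where "U = (UNIV - {0::'a})"
    define g where "g = (\<lambda>(c3::'a, c1::'a, x::'a vec7). (c3 *s r3, c1 *s r1, x))"
    have inj: "inj_on g (U \<times> U \<times> (S - vec.span {q0, r1, r3}))" unfolding g_def using nz by (auto intro!: inj_onI)
    have mem: "g (c3, c1, x) \<in> {t \<in> T. f t = S}"
      if c: "c3 \<noteq> 0" "c1 \<noteq> 0" and x: "x \<in> S" "x \<notin> vec.span {q0, r1, r3}" for c3 c1 x
    proof -
      have m: "c1 *s r1 \<in> E1" "c1 *s r1 \<notin> P" "c3 *s r3 \<in> E3" "c3 *s r3 \<notin> P"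
        using scale_mem[OF E(1) P(1) r(1,2) c(2)] scale_mem[OF E(5) P(1) r(3,4) c(1)] by auto
      have pieq: "vec.span {q0, c1 *s r1, c3 *s r3} = vec.span {q0, r1, r3}"
      proof -
        have "vec.span {q0, c1 *s r1, c3 *s r3} = vec.span (insert (c1 *s r1) {q0, c3 *s r3})"
          by (rule arg_cong[where f=vec.span]) auto
        also have "\<dots> = vec.span (insert r1 {q0, c3 *s r3})" by (rule span_scale_insert[OF c(2)])
        also have "\<dots> = vec.span (insert (c3 *s r3) {q0, r1})"
          by (rule arg_cong[where f=vec.span]) auto
        also have "\<dots> = vec.span (insert r3 {q0, r1})" by (rule span_scale_insert[OF c(1)])
        also have "\<dots> = vec.span {q0, r1, r3}"
          by (rule arg_cong[where f=vec.span]) auto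
        finally show ?thesis .
      qed
      have Weq: "W (c3 *s r3) = W r3"
      proof -
        have "W (c3 *s r3) = vec.span (insert (c3 *s r3) (insert q0 E2))" unfolding W_def
          by (rule arg_cong[where f=vec.span]) auto
        also have "\<dots> = vec.span (insert r3 (insert q0 E2))" by (rule span_scale_insert[OF c(1)])
        also have "\<dots> = W r3" unfolding W_def by (rule arg_cong[where f=vec.span]) auto
        finally show ?thesis .
      qed
      have "c1 *s r1 \<in> W r3" using r(5) unfolding W_def by (intro vec.span_scale)
      then have inW: "c1 *s r1 \<in> W (c3 *s r3)" using Weq by simp
      have xn: "x \<notin> vec.span {q0, c1 *s r1, c3 *s r3}" using x(2) pieq by simp
      have cr: "c1 *s r1 \<in> S" "c3 *s r3 \<in> S" using r(6,7) sS(1) vec.subspace_scale by blast+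
      have "vec.span {x, q0, c1 *s r1, c3 *s r3} = S"
        using span_eq_of_indep[OF sS(1), of "{x, q0, c1 *s r1, c3 *s r3}"] i4[OF m xn] sS cr x by simp
      then show ?thesis unfolding T_def f_def g_def using m inW xn by auto
    qed
    have "g ` (U \<times> U \<times> (S - vec.span {q0, r1, r3})) \<subseteq> {t \<in> T. f t = S}" using mem unfolding U_def by auto
    then have "card (g ` (U \<times> U \<times> (S - vec.span {q0, r1, r3}))) \<le> card {t \<in> T. f t = S}" by (intro card_mono) auto
    moreover have "card (g ` (U \<times> U \<times> (S - vec.span {q0, r1, r3}))) = (q - 1) * (q - 1) * (q^4 - q^3)"
      using card_image[OF inj] card_nonzero[where 'a='a] cSpi unfolding q_def U_def by (simp add: card_cartesian_product)
    ultimately show ?thesis by simp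
  qed
  have m1: "(q - 1) * (q - 1) * (q^4 - q^3) * card SS \<le> card T"
    by (rule fiber_bound[of T SS _ f]) (use fib in auto)
  have e1: "(q^3 - q) * ((q^2 - q) * (q^7 - q^3)) = ((q - 1) * (q - 1) * (q^4 - q^3)) * ((q^3 + q^2) * (q^3 + q^2 + q + 1))"
  proof -
    have a: "q \<le> q^3" "q \<le> q^2" "q^3 \<le> q^7" "q^3 \<le> q^4" "1 \<le> q" using q2
      by (auto intro!: power_increasing[where n=1, simplified] power_increasing)
    have "int ((q^3 - q) * ((q^2 - q) * (q^7 - q^3))) = int (((q - 1) * (q - 1) * (q^4 - q^3)) * ((q^3 + q^2) * (q^3 + q^2 + q + 1)))"
      using a by (simp add: of_nat_diff) algebra
    then show ?thesis using of_nat_eq_iff by blast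
  qed
  have pos: "0 < (q - 1) * (q - 1) * (q^4 - q^3)"
  proof -
    have "q^3 < q^4" using q2 by (auto intro!: power_strict_increasing)
    then show ?thesis using q2 by simp
  qed
  have "card SS \<le> (q^3 + q^2) * (q^3 + q^2 + q + 1)" using cancel_le2[OF m1 cT[unfolded e1] pos] .
  then show ?thesis unfolding SS_def W_def q_def .
qed

lemma card_by_fst:
  fixes C :: "(('b::finite) \<times> ('c::finite)) set"
  assumes "F \<subseteq> C" "\<And>x. x \<in> F \<Longrightarrow> fst x \<in> PP" "\<And>E. E \<in> PP \<Longrightarrow> card {S. (E,S) \<in> C} \<le> k"
  shows "card F \<le> k * card PP"
proof -
  have "F \<subseteq> (\<Union>E\<in>PP. (\<lambda>S. (E,S)) ` {S. (E,S) \<in> C})"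
    using assms(1,2) by force
  then have "card F \<le> card (\<Union>E\<in>PP. (\<lambda>S. (E,S)) ` {S. (E,S) \<in> C})" by (intro card_mono) auto
  also have "\<dots> \<le> (\<Sum>E\<in>PP. card ((\<lambda>S. (E,S)) ` {S. (E,S) \<in> C}))" by (intro card_UN_le) auto
  also have "\<dots> \<le> (\<Sum>E\<in>PP. k)"
  proof (intro sum_mono)
    fix E assume "E \<in> PP"
    then show "card ((\<lambda>S. (E,S)) ` {S. (E,S) \<in> C}) \<le> k"
      using assms(3) card_image_le[of "{S. (E,S) \<in> C}" "\<lambda>S. (E,S)"] by force
  qed
  finally show ?thesis by (simp add: mult.commute)
qed

lemma card_by_snd:
  fixes C :: "(('b::finite) \<times> ('c::finite)) set"
  assumes "F \<subseteq> C" "\<And>x. x \<in> F \<Longrightarrow> snd x \<in> SS" "\<And>S. S \<in> SS \<Longrightarrow> card {E. (E,S) \<in> C} \<le> k"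
  shows "card F \<le> k * card SS"
proof -
  have "F \<subseteq> (\<Union>S\<in>SS. (\<lambda>E. (E,S)) ` {E. (E,S) \<in> C})"
    using assms(1,2) by force
  then have "card F \<le> card (\<Union>S\<in>SS. (\<lambda>E. (E,S)) ` {E. (E,S) \<in> C})" by (intro card_mono) auto
  also have "\<dots> \<le> (\<Sum>S\<in>SS. card ((\<lambda>E. (E,S)) ` {E. (E,S) \<in> C}))" by (intro card_UN_le) auto
  also have "\<dots> \<le> (\<Sum>S\<in>SS. k)"
  proof (intro sum_mono)
    fix S assume "S \<in> SS"
    then show "card ((\<lambda>E. (E,S)) ` {E. (E,S) \<in> C}) \<le> k"
      using assms(3) card_image_le[of "{E. (E,S) \<in> C}" "\<lambda>E. (E,S)"] by force
  qed
  finally show ?thesis by (simp add: mult.commute)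
qed

lemma final_arith:
  fixes q :: nat
  shows "(q+1) * (3 * ((q^3+q^2+q+1)*(q^4+q^3) + (q^2+1)*(q^2+q+1))
           + ((q^6+q^5) + (q^2+q)^3 + (q^3+q^2)*(q^3+q^2+q+1)))
         \<le> 3*q^8 + 12*q^7 + 21*q^6 + 28*q^5 + 26*q^4 + 18*q^3 + 12*q^2 + 8*q + 4"
proof -
  have "int ((q+1) * (3 * ((q^3+q^2+q+1)*(q^4+q^3) + (q^2+1)*(q^2+q+1))
           + ((q^6+q^5) + (q^2+q)^3 + (q^3+q^2)*(q^3+q^2+q+1))) + (q+1)*(2*q^4+q^3+q^2+q+1))
       = int (3*q^8 + 12*q^7 + 21*q^6 + 28*q^5 + 26*q^4 + 18*q^3 + 12*q^2 + 8*q + 4)"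
    by simp algebra
  then have "(q+1) * (3 * ((q^3+q^2+q+1)*(q^4+q^3) + (q^2+1)*(q^2+q+1))
           + ((q^6+q^5) + (q^2+q)^3 + (q^3+q^2)*(q^3+q^2+q+1))) + (q+1)*(2*q^4+q^3+q^2+q+1)
       = 3*q^8 + 12*q^7 + 21*q^6 + 28*q^5 + 26*q^4 + 18*q^3 + 12*q^2 + 8*q + 4"
    using of_nat_eq_iff by blast
  then show ?thesis by linarith
qed

lemma sub_in_P:
  fixes E S S1 P :: "'a::field vec7 set"
  assumes "vec.subspace E" "vec.dim E = 3" "vec.subspace S" "vec.dim S = 4" "E \<subseteq> S"
    "vec.subspace S1" "E \<inter> S1 = {0}" "vec.subspace P" "vec.dim P = 1" "P \<subseteq> S" "P \<subseteq> S1"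
  shows "S \<inter> S1 = P"
proof -
  define U where "U = S \<inter> S1"
  have sU: "vec.subspace U" unfolding U_def by (rule vec.subspace_inter[OF assms(3,6)])
  have "{x + y |x y. x \<in> E \<and> y \<in> U} \<subseteq> S"
  proof clarify
    fix x y assume "x \<in> E" "y \<in> U"
    then show "x + y \<in> S" using assms(5) vec.subspace_add[OF assms(3)] unfolding U_def by blast
  qed
  then have "vec.dim {x + y |x y. x \<in> E \<and> y \<in> U} \<le> vec.dim S" by (rule vec.dim_subset)
  then have d1: "vec.dim {x + y |x y. x \<in> E \<and> y \<in> U} \<le> 4" using assms(4) by simp
  have "E \<inter> U \<subseteq> {0}" using assms(7) unfolding U_def by blast
  then have d2: "vec.dim (E \<inter> U) = 0" by simp
  have "vec.dim U \<le> 1" using vec.dim_sums_Int[OF assms(1) sU] d1 d2 assms(2) by simp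
  moreover have "P \<subseteq> U" unfolding U_def using assms(10,11) by (rule Int_greatest)
  ultimately have "P = U" using vec.subspace_dim_equal[OF assms(8) sU] assms(9) by simp
  then show ?thesis unfolding U_def by simp
qed

theorem lemma4p3:
  fixes C :: "(('a::{field,finite}) vec7 set \<times> 'a vec7 set) set"
    and P Q :: "'a vec7 set"
    and E S :: "nat \<Rightarrow> 'a vec7 set"
  assumes indep: "independent_flags C"
    and planes: "\<And>E0. is_plane E0 \<Longrightarrow> card {S0. (E0, S0) \<in> C} \<le> CARD('a) + 1"
    and solids: "\<And>S0. is_solid S0 \<Longrightarrow> card {E0. (E0, S0) \<in> C} \<le> CARD('a) + 1"
    and P: "is_point P"
    and inD: "\<And>i. i \<in> {1,2,3} \<Longrightarrow> (E i, S i) \<in> Delta P C"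
    and meet: "\<And>i j. i \<in> {1,2,3} \<Longrightarrow> j \<in> {1,2,3} \<Longrightarrow> i \<noteq> j \<Longrightarrow> E i \<inter> E j = P"
    and Q: "is_point Q"
    and Qspan: "\<And>i j. i \<in> {1,2,3} \<Longrightarrow> j \<in> {1,2,3} \<Longrightarrow> \<not> Q \<subseteq> vec.span (E i \<union> E j)"
    and QS: "\<And>i. i \<in> {1,2,3} \<Longrightarrow> \<not> Q \<subseteq> S i"
  shows "card (Delta Q C) \<le> (let q = CARD('a) in
           3*q^8 + 12*q^7 + 21*q^6 + 28*q^5 + 26*q^4 + 18*q^3 + 12*q^2 + 8*q + 4)"
proof -
  define q where "q = CARD('a)"
  have flag: "is_flag23 F" if "F \<in> C" for F using indep that unfolding independent_flags_def by blast
  have nonadj: "\<not> kneser_adj F F'" if "F \<in> C" "F' \<in> C" for F F'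
    using indep that unfolding independent_flags_def by blast
  obtain q0 where q0: "q0 \<noteq> 0" "Q = vec.span {q0}" using point_span[OF Q] by blast
  obtain p0 where p0: "p0 \<noteq> 0" "P = vec.span {p0}" using point_span[OF P] by blast
  have sP: "vec.subspace P" "vec.dim P = 1" using P unfolding is_point_def psub_of_dim_def by auto
  have p0P: "p0 \<in> P" unfolding p0(2) by (rule vec.span_base) simp
  have Ei: "(E i, S i) \<in> C \<and> P \<subseteq> E i \<and> vec.subspace (E i) \<and> vec.dim (E i) = 3 \<and>
      vec.subspace (S i) \<and> vec.dim (S i) = 4 \<and> E i \<subseteq> S i" if "i \<in> {1,2,3}" for i
  proof -
    have "(E i, S i) \<in> C" "P \<subseteq> E i" using inD[OF that] unfolding Delta_def by auto
    then show ?thesis using flag[of "(E i, S i)"]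
      unfolding is_flag23_def is_plane_def is_solid_def psub_of_dim_def by auto
  qed
  have mem_iff: "q0 \<in> X \<longleftrightarrow> Q \<subseteq> X" if "vec.subspace X" for X
  proof
    assume "q0 \<in> X" then show "Q \<subseteq> X" unfolding q0(2) using that vec.span_minimal by blast
  next
    assume "Q \<subseteq> X" then show "q0 \<in> X" unfolding q0(2) by (meson insertI1 subsetD vec.span_base)
  qed
  have q0S: "q0 \<notin> S i" if "i \<in> {1,2,3}" for i using QS[OF that] mem_iff Ei[OF that] by blast
  have q0EE: "q0 \<notin> vec.span (E i \<union> E j)" if "i \<in> {1,2,3}" "j \<in> {1,2,3}" for i j
    using Qspan[OF that] mem_iff[of "vec.span (E i \<union> E j)"] vec.subspace_span by blast
  have i1: "1 \<in> {1::nat,2,3}" and i2: "2 \<in> {1::nat,2,3}" and i3: "3 \<in> {1::nat,2,3}" by auto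
  have sE1: "vec.subspace (E 1)" "vec.dim (E 1) = 3" "P \<subseteq> E 1" "vec.subspace (S 1)" "vec.dim (S 1) = 4" "E 1 \<subseteq> S 1"
    using Ei[OF i1] by auto
  have sE2: "vec.subspace (E 2)" "vec.dim (E 2) = 3" "P \<subseteq> E 2"
    using Ei[OF i2] by auto
  have sE3: "vec.subspace (E 3)" "vec.dim (E 3) = 3" "P \<subseteq> E 3"
    using Ei[OF i3] by auto
  have m12: "E 1 \<inter> E 2 = P" and m13: "E 1 \<inter> E 3 = P" and m23: "E 2 \<inter> E 3 = P"
    using meet by auto
  have p0S1: "p0 \<in> S 1" using p0P sE1 by blast
  have dlt: "Delta Q C = {F \<in> C. Q \<subseteq> fst F}" unfolding Delta_def by simp
  have DF: "F \<in> C \<and> q0 \<in> fst F \<and> is_plane (fst F) \<and> is_solid (snd F) \<and> fst F \<subseteq> snd F"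
    if "F \<in> Delta Q C" for F
  proof -
    have F: "F \<in> C" "Q \<subseteq> fst F" using that unfolding dlt by auto
    then have fl: "is_plane (fst F)" "is_solid (snd F)" "fst F \<subseteq> snd F" using flag unfolding is_flag23_def by auto
    then have "vec.subspace (fst F)" unfolding is_plane_def psub_of_dim_def by auto
    then show ?thesis using F fl mem_iff by blast
  qed
  define A where "A = (\<lambda>i. {F \<in> Delta Q C. fst F \<inter> S i \<noteq> {0}})"
  define B where "B = {F \<in> Delta Q C. \<forall>i\<in>{1,2,3}. fst F \<inter> S i = {0}}"
  define Ka where "Ka = (q^3+q^2+q+1)*(q^4+q^3)"
  define Kb where "Kb = (q^2+1)*(q^2+q+1)"
  define K1 where "K1 = q^6+q^5"
  define K2a where "K2a = (q^2+q)^3"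
  define K2b where "K2b = (q^3+q^2)*(q^3+q^2+q+1)"
  have cover: "Delta Q C \<subseteq> A 1 \<union> A 2 \<union> A 3 \<union> B" unfolding A_def B_def by auto
  have cD: "card (Delta Q C) \<le> card (A 1) + card (A 2) + card (A 3) + card B"
  proof -
    have "card (Delta Q C) \<le> card (A 1 \<union> A 2 \<union> A 3 \<union> B)" using cover by (intro card_mono) auto
    then show ?thesis
      using card_Un_le[of "A 1 \<union> A 2 \<union> A 3" B] card_Un_le[of "A 1 \<union> A 2" "A 3"] card_Un_le[of "A 1" "A 2"]
      by linarith
  qed
  have cA: "card (A i) \<le> (q+1) * (Ka + Kb)" if i: "i \<in> {1,2,3}" for i
  proof -
    define Pa where "Pa = {E. is_plane E \<and> q0 \<in> E \<and> E \<inter> S i \<noteq> {0} \<and> \<not> E \<subseteq> vec.span (insert q0 (S i))}"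
    define Pb where "Pb = {E. is_plane E \<and> q0 \<in> E \<and> E \<subseteq> vec.span (insert q0 (S i))}"
    have sSi: "vec.subspace (S i)" "vec.dim (S i) = 4" using Ei[OF i] by auto
    have "card (A i) \<le> (q+1) * card (Pa \<union> Pb)"
    proof (rule card_by_fst[of "A i" C])
      show "A i \<subseteq> C" unfolding A_def Delta_def by auto
      show "fst x \<in> Pa \<union> Pb" if "x \<in> A i" for x
        using that DF unfolding A_def Pa_def Pb_def by auto
      show "card {S. (E0, S) \<in> C} \<le> q + 1" if "E0 \<in> Pa \<union> Pb" for E0
        using that planes unfolding Pa_def Pb_def q_def by auto
    qed
    also have "\<dots> \<le> (q+1) * (card Pa + card Pb)" using card_Un_le[of Pa Pb] by (rule mult_le_mono2)
    also have "\<dots> \<le> (q+1) * (Ka + Kb)"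
    proof -
      have "card Pa \<le> Ka" unfolding Pa_def Ka_def q_def using count_Pa[OF sSi q0S[OF i]] .
      moreover have "card Pb \<le> Kb"
      proof -
        have W: "vec.subspace (vec.span (insert q0 (S i)))" "vec.dim (vec.span (insert q0 (S i))) = 5"
          using dim_V5[OF sSi(1) q0S[OF i]] sSi(2) by auto
        have "q0 \<in> vec.span (insert q0 (S i))" by (rule vec.span_base) simp
        then show ?thesis unfolding Pb_def Kb_def q_def using count_Pb[OF W _ q0(1)] by blast
      qed
      ultimately have "card Pa + card Pb \<le> Ka + Kb" by simp
      then show ?thesis by (rule mult_le_mono2)
    qed
    finally show ?thesis .
  qed
  have cB: "card B \<le> (q+1) * (K1 + K2a + K2b)"
  proof -
    define SS1 where "SS1 = {Y. is_solid Y \<and> q0 \<in> Y \<and> p0 \<in> Y \<and> Y \<inter> vec.span (insert q0 (S 1)) \<subseteq> vec.span {q0, p0}}"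
    define SS2a where "SS2a = {Y. is_solid Y \<and> (\<exists>r1\<in>E 1 - P. \<exists>r2\<in>E 2 - P. \<exists>r3\<in>E 3 - P. Y = vec.span {q0, r1, r2, r3})}"
    define SS2b where "SS2b = {Y. is_solid Y \<and> q0 \<in> Y \<and> (\<exists>r1 r3. r1 \<in> E 1 - P \<and> r3 \<in> E 3 - P \<and>
              r1 \<in> vec.span (insert q0 (insert r3 (E 2))) \<and> r1 \<in> Y \<and> r3 \<in> Y)}"
    have "card B \<le> (q+1) * card (SS1 \<union> SS2a \<union> SS2b)"
    proof (rule card_by_snd[of B C])
      show "B \<subseteq> C" unfolding B_def Delta_def by auto
      show "card {E. (E, Y) \<in> C} \<le> q + 1" if "Y \<in> SS1 \<union> SS2a \<union> SS2b" for Y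
        using that solids unfolding SS1_def SS2a_def SS2b_def q_def by auto
      show "snd x \<in> SS1 \<union> SS2a \<union> SS2b" if xB: "x \<in> B" for x
      proof -
        obtain X Y where x: "x = (X, Y)" by fastforce
        have XB: "(X, Y) \<in> Delta Q C" "\<And>i. i \<in> {1,2,3} \<Longrightarrow> X \<inter> S i = {0}"
          using xB unfolding x B_def by auto
        have XY: "(X, Y) \<in> C" "q0 \<in> X" "vec.subspace X" "vec.dim X = 3" "vec.subspace Y" "vec.dim Y = 4" "X \<subseteq> Y"
          using DF[OF XB(1)] unfolding is_plane_def is_solid_def psub_of_dim_def by auto
        have solY: "is_solid Y" using XY unfolding is_solid_def psub_of_dim_def by auto
        have q0Y: "q0 \<in> Y" using XY by blast
        have meetY: "E i \<inter> Y \<noteq> {0}" if i: "i \<in> {1,2,3}" for i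
        proof -
          have EiC: "(E i, S i) \<in> C" "P \<subseteq> E i" "E i \<subseteq> S i" using Ei[OF i] by auto
          have "\<not> kneser_adj (X, Y) (E i, S i)" using nonadj XY(1) EiC(1) by blast
          moreover have "(X, Y) \<noteq> (E i, S i)"
          proof
            assume "(X, Y) = (E i, S i)"
            then have "p0 \<in> X \<inter> S i" using p0P EiC by auto
            then show False using XB(2)[OF i] p0(1) by auto
          qed
          ultimately show ?thesis using XB(2)[OF i] unfolding kneser_adj_def by auto
        qed
        have "Y \<in> SS1 \<union> SS2a \<union> SS2b"
        proof (cases "p0 \<in> Y")
          case True
          have PY: "P \<subseteq> Y" unfolding p0(2) using True XY(5) vec.span_minimal by blast
          have YS1: "Y \<inter> S 1 = P"
            using sub_in_P[OF XY(3,4,5,6,7) sE1(4) XB(2)[OF i1] sP PY] sE1 by blast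
          have "Y \<inter> vec.span (insert q0 (S 1)) \<subseteq> vec.span {q0, p0}"
          proof
            fix v assume v: "v \<in> Y \<inter> vec.span (insert q0 (S 1))"
            then obtain k where k: "v - k *s q0 \<in> vec.span (S 1)" using vec.span_breakdown_eq by blast
            have eS1: "vec.span (S 1) = S 1" using sE1(4) by simp
            have k1: "v - k *s q0 \<in> S 1" using k unfolding eS1 .
            have "v - k *s q0 \<in> Y" using v q0Y XY(5) by (intro vec.subspace_diff vec.subspace_scale) auto
            then have "v - k *s q0 \<in> P" using YS1 k1 by blast
            moreover have "P \<subseteq> vec.span {q0, p0}" unfolding p0(2) by (intro vec.span_mono) auto
            ultimately have a: "v - k *s q0 \<in> vec.span {q0, p0}" by blast
            have b: "k *s q0 \<in> vec.span {q0, p0}" by (intro vec.span_scale vec.span_base) simp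
            have "v = (v - k *s q0) + k *s q0" by simp
            then show "v \<in> vec.span {q0, p0}" using vec.span_add[OF a b] by metis
          qed
          then show ?thesis unfolding SS1_def using solY q0Y True by blast
        next
          case False
          have ex: "\<exists>r. r \<in> E i \<and> r \<in> Y \<and> r \<noteq> 0 \<and> r \<notin> P" if i: "i \<in> {1,2,3}" for i
          proof -
            have "0 \<in> E i" "0 \<in> Y" using Ei[OF i] XY(5) vec.subspace_0 by auto
            then obtain r where r: "r \<in> E i" "r \<in> Y" "r \<noteq> 0" using meetY[OF i] by blast
            have "r \<notin> P" unfolding p0(2) using notin_span1[OF XY(5) False r(2,3)] .
            then show ?thesis using r by blast
          qed
          obtain r1 where r1: "r1 \<in> E 1" "r1 \<in> Y" "r1 \<noteq> 0" "r1 \<notin> P" using ex[OF i1] by blast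
          obtain r2 where r2: "r2 \<in> E 2" "r2 \<in> Y" "r2 \<noteq> 0" "r2 \<notin> P" using ex[OF i2] by blast
          obtain r3 where r3: "r3 \<in> E 3" "r3 \<in> Y" "r3 \<noteq> 0" "r3 \<notin> P" using ex[OF i3] by blast
          show ?thesis
          proof (cases "Y = vec.span {q0, r1, r2, r3}")
            case True
            then show ?thesis unfolding SS2a_def using solY r1 r2 r3 by blast
          next
            case False
            have sub4: "vec.span {q0, r1, r2, r3} \<subseteq> Y"
              using q0Y r1 r2 r3 XY(5) vec.span_minimal[of "{q0, r1, r2, r3}" Y] by blast
            have d4: "vec.dim (vec.span {q0, r1, r2, r3}) < 4"
              using dim_lt_if_psub[OF XY(5) vec.subspace_span sub4] False XY(6) by auto
            have pi3: "vec.span {q0, r1, r3} \<subseteq> vec.span {q0, r1, r2, r3}" by (intro vec.span_mono) auto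
            have ind: "vec.independent {q0, r1, r3} \<and> card {q0, r1, r3} = 3"
              using indep_pair13[OF sE1(1) sE3(1) sP(1) m13 q0EE[OF i1 i3] r1(1,4) r3(1,4)] .
            then have "vec.dim (vec.span {q0, r1, r3}) = 3" using vec.dim_span_eq_card_independent by metis
            then have "vec.span {q0, r1, r3} = vec.span {q0, r1, r2, r3}"
              using vec.subspace_dim_equal[OF vec.subspace_span vec.subspace_span pi3] d4 by simp
            moreover have "r2 \<in> vec.span {q0, r1, r2, r3}" by (intro vec.span_base) simp
            ultimately have r2pi: "r2 \<in> vec.span {q0, r1, r3}" by simp
            have seq: "{q0, r1, r3} = insert r1 {q0, r3}" by auto
            have "r2 \<in> vec.span (insert r1 {q0, r3})" using r2pi unfolding seq .
            then obtain k where k: "r2 - k *s r1 \<in> vec.span {q0, r3}"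
              unfolding vec.span_breakdown_eq by blast
            have k0: "k \<noteq> 0"
            proof
              assume "k = 0"
              then have r2s: "r2 \<in> vec.span {q0, r3}" using k by simp
              have ind2: "vec.independent {q0, r2, r3} \<and> card {q0, r2, r3} = 3"
                using indep_pair13[OF sE2(1) sE3(1) sP(1) m23 q0EE[OF i2 i3] r2(1,4) r3(1,4)] .
              have "{q0, r2, r3} \<subseteq> vec.span {q0, r3}" using r2s by (auto intro: vec.span_base)
              then have "vec.dim {q0, r2, r3} \<le> card {q0, r3}" by (rule vec.dim_le_card) simp
              moreover have "card {q0, r3} \<le> 2" by (rule card_insert_le_m1) auto
              moreover have "vec.dim {q0, r2, r3} = 3" using ind2 vec.dim_eq_card_independent by metis
              ultimately show False by simp
            qed
            define W where "W = vec.span (insert q0 (insert r3 (E 2)))"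
            have a: "r2 - k *s r1 \<in> W" unfolding W_def using k by (rule subsetD[OF vec.span_mono, rotated]) auto
            have b: "r2 \<in> W" unfolding W_def using r2(1) by (intro vec.span_base) simp
            have "r1 = inverse k *s (r2 - (r2 - k *s r1))" using k0 by (simp add: vector_smult_assoc)
            moreover have "inverse k *s (r2 - (r2 - k *s r1)) \<in> W"
              unfolding W_def by (intro vec.span_scale vec.span_diff b[unfolded W_def] a[unfolded W_def])
            ultimately have "r1 \<in> W" by simp
            then show ?thesis unfolding SS2b_def W_def using solY q0Y r1 r3 by blast
          qed
        qed
        then show ?thesis unfolding x by simp
      qed
    qed
    also have "\<dots> \<le> (q+1) * (K1 + K2a + K2b)"
    proof -
      have "card SS1 \<le> K1" unfolding SS1_def K1_def q_def
        using count_S1[OF sE1(4,5) q0S[OF i1] p0S1 p0(1)] .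
      moreover have "card SS2a \<le> K2a" unfolding SS2a_def K2a_def q_def
        using count_S2a[OF sE1(1,2) sE2(1,2) sE3(1,2) sP sE1(3) sE2(3) sE3(3)] .
      moreover have "card SS2b \<le> K2b" unfolding SS2b_def K2b_def q_def
        using count_S2b[OF sE1(1,2) sE2(1,2) sE3(1,2) sP sE2(3) m12 m13 q0EE[OF i1 i2] q0EE[OF i1 i3]] .
      moreover have "card (SS1 \<union> SS2a \<union> SS2b) \<le> card SS1 + card SS2a + card SS2b"
        using card_Un_le[of "SS1 \<union> SS2a" SS2b] card_Un_le[of SS1 SS2a] by linarith
      ultimately have "card (SS1 \<union> SS2a \<union> SS2b) \<le> K1 + K2a + K2b" by linarith
      then show ?thesis by (rule mult_le_mono2)
    qed
    finally show ?thesis .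
  qed
  have "card (Delta Q C) \<le> (q+1) * (3 * (Ka + Kb) + (K1 + K2a + K2b))"
    using cD cA[OF i1] cA[OF i2] cA[OF i3] cB by (simp add: algebra_simps)
  also have "\<dots> \<le> 3*q^8 + 12*q^7 + 21*q^6 + 28*q^5 + 26*q^4 + 18*q^3 + 12*q^2 + 8*q + 4"
    unfolding Ka_def Kb_def K1_def K2a_def K2b_def using final_arith[of q] by (simp add: add.assoc)
  finally show ?thesis unfolding q_def Let_def .
qed

end
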